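(* Under the standing setting and assumptions (A1)–(A3) described in the context, assume that the acceptance set $\mathcal A$ is polyhedral. Then the optimal payoff map $\mathcal R$ is lower semicontinuous at every $X\in\mathcal X$.
   Context: Let $\mathcal X$ be a Hausdorff, first countable, locally convex topological vector space over $\mathbb R$ with topological dual $\mathcal X'$, partially ordered by a partial order $\geq$ with positive cone $\mathcal X_+=\{X\in\mathcal X: X\geq 0\}$. Let $\mathcal M\subset\mathcal X$ be a vector subspace with $1<\dim\mathcal M<\infty$, carrying the relative topology, and let $\pi:\mathcal M\to\mathbb R$ be linear. Standing assumptions: (A1) there is $U\in\mathcal M\cap\mathcal X_+$ with $\pi(U)=1$; (A2) $\mathcal A\subsetneq\mathcal X$ is closed, contains $0$, and satisfies $\mathcal A+\mathcal X_+\subset\mathcal A$; (A3) the map $\rho:\mathcal X\to[-\infty,\infty]$, $\rho(X)=\inf\{\pi(Z): Z\in\mathcal M,\ X+Z\in\mathcal A\}$, is finitely valued and continuous. The optimal payoff map $\mathcal R:\mathcal X\rightrightarrows\mathcal M$ is $\mathcal R(X)=\{Z\in\mathcal M: X+Z\in\mathcal A,\ \pi(Z)=\rho(X)\}$. A set is polyhedral if it is a finite intersection of sets $\{X\in\mathcal X:\varphi(X)\geq\alpha\}$ with $\varphi\in\mathcal X'$, $\alpha\in\mathbb R$. $\mathcal R$ is lower semicontinuous at $X$ if for every open $\mathcal U\subset\mathcal M$ with $\mathcal R(X)\cap\mathcal U\neq\emptyset$ there is an open neighborhood $\mathcal U_X$ of $X$ in $\mathcal X$ such that $\mathcal R(Y)\cap\mathcal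 U\neq\emptyset$ for all $Y\in\mathcal U_X$. *)

theory Defs
  imports "HOL-Analysis.Analysis"
begin

definition locally_convex_tvs :: "('a::{real_vector,topological_space}) itself \<Rightarrow> bool" where
  "locally_convex_tvs _ \<longleftrightarrow>
     continuous_on UNIV (\<lambda>p::'a \<times> 'a. fst p + snd p) \<and>
     continuous_on UNIV (\<lambda>p::real \<times> 'a. fst p *\<^sub>R snd p) \<and>
     (\<forall>W::'a set. open W \<and> 0 \<in> W \<longrightarrow> (\<exists>V. open V \<and> convex V \<and> 0 \<in> V \<and> V \<subseteq> W))"

definition vector_partial_order :: "('a::real_vector \<Rightarrow> 'a \<Rightarrow> bool) \<Rightarrow> bool" where
  "vector_partial_order geq \<longleftrightarrow>
     (\<forall>x. geq x x) \<and>
     (\<forall>x y. geq x y \<and> geq y x \<longrightarrow> x = y) \<and>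
     (\<forall>x y z. geq x y \<and> geq y z \<longrightarrow> geq x z) \<and>
     (\<forall>x y z. geq x y \<longrightarrow> geq (x + z) (y + z)) \<and>
     (\<forall>x y (c::real). geq x y \<and> c \<ge> 0 \<longrightarrow> geq (c *\<^sub>R x) (c *\<^sub>R y))"

definition positive_cone :: "('a::real_vector \<Rightarrow> 'a \<Rightarrow> bool) \<Rightarrow> 'a set" where
  "positive_cone geq = {x. geq x 0}"

definition topological_dual :: "('a::{real_vector,topological_space} \<Rightarrow> real) set" where
  "topological_dual = {\<phi>. linear \<phi> \<and> continuous_on UNIV \<phi>}"

definition polyhedral :: "'a::{real_vector,topological_space} set \<Rightarrow> bool" where
  "polyhedral S \<longleftrightarrow>
     (\<exists>F::(('a \<Rightarrow> real) \<times> real) set. finite F \<and> (\<forall>(\<phi>, \<alpha>)\<in>F. \<phi> \<in> topological_dual) \<and>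
        S = {x. \<forall>(\<phi>, \<alpha>)\<in>F. \<phi> x \<ge> \<alpha>})"

definition risk_measure :: "'a::real_vector set \<Rightarrow> 'a set \<Rightarrow> ('a \<Rightarrow> real) \<Rightarrow> 'a \<Rightarrow> ereal" where
  "risk_measure A M \<pi> X = Inf ((\<lambda>Z. ereal (\<pi> Z)) ` {Z \<in> M. X + Z \<in> A})"

definition optimal_payoffs :: "'a::real_vector set \<Rightarrow> 'a set \<Rightarrow> ('a \<Rightarrow> real) \<Rightarrow> 'a \<Rightarrow> 'a set" where
  "optimal_payoffs A M \<pi> X =
     {Z \<in> M. X + Z \<in> A \<and> ereal (\<pi> Z) = risk_measure A M \<pi> X}"

definition lsc_at :: "'a::topological_space set \<Rightarrow> ('a \<Rightarrow> 'a set) \<Rightarrow> 'a \<Rightarrow> bool" where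
  "lsc_at M R X \<longleftrightarrow>
     (\<forall>U. openin (top_of_set M) U \<and> R X \<inter> U \<noteq> {} \<longrightarrow>
        (\<exists>V. open V \<and> X \<in> V \<and> (\<forall>Y\<in>V. R Y \<inter> U \<noteq> {})))"

end

theory Submission
  imports Defs
begin

definition lin_on :: "'a::real_vector set \<Rightarrow> ('a \<Rightarrow> real) \<Rightarrow> bool" where
  "lin_on S g \<longleftrightarrow> (\<forall>u\<in>S. \<forall>v\<in>S. g (u + v) = g u + g v) \<and> (\<forall>c u. u \<in> S \<longrightarrow> g (c *\<^sub>R u) = c * g u)"

definition feas :: "(('a \<Rightarrow> real) \<times> ('p \<Rightarrow> real)) set \<Rightarrow> 'p \<Rightarrow> 'a \<Rightarrow> bool" where
  "feas C p z \<longleftrightarrow> (\<forall>c\<in>C. snd c p \<le> fst c z)"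

definition comb :: "'a \<Rightarrow> ('a \<Rightarrow> real) \<times> ('p \<Rightarrow> real) \<Rightarrow> ('a \<Rightarrow> real) \<times> ('p \<Rightarrow> real) \<Rightarrow> ('a \<Rightarrow> real) \<times> ('p \<Rightarrow> real)" where
  "comb e c1 c2 = (\<lambda>z. (- fst c2 e) * fst c1 z + fst c1 e * fst c2 z,
                   \<lambda>p. (- fst c2 e) * snd c1 p + fst c1 e * snd c2 p)"

definition elim :: "'a \<Rightarrow> (('a \<Rightarrow> real) \<times> ('p \<Rightarrow> real)) set \<Rightarrow> (('a \<Rightarrow> real) \<times> ('p \<Rightarrow> real)) set" where
  "elim e C = {c\<in>C. fst c e = 0} \<union> (\<lambda>(c1, c2). comb e c1 c2) ` ({c\<in>C. 0 < fst c e} \<times> {c\<in>C. fst c e < 0})"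

lemma lin_on_comb:
  assumes "lin_on S g" "subspace S" "z \<in> S" "e \<in> S"
  shows "g (z + x *\<^sub>R e) = g z + x * g e"
  using assms unfolding lin_on_def by (simp add: subspace_scale)

lemma finite_elim: "finite C \<Longrightarrow> finite (elim e C)"
  unfolding elim_def by auto

lemma elim_sub: "elim e C \<subseteq> {c\<in>C. fst c e = 0} \<union> {comb e c1 c2 |c1 c2. c1 \<in> C \<and> c2 \<in> C \<and> 0 < fst c1 e \<and> fst c2 e < 0}"
  unfolding elim_def by auto

lemma lin_on_comb_fst:
  assumes "lin_on S g1" "lin_on S g2"
  shows "lin_on S (\<lambda>z. a * g1 z + b * g2 z)"
  using assms unfolding lin_on_def by (simp add: algebra_simps)

lemma elim_lin:
  assumes "\<forall>c\<in>C. lin_on S (fst c)"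
  shows "\<forall>c\<in>elim e C. lin_on S (fst c)"
proof
  fix c assume c: "c \<in> elim e C"
  show "lin_on S (fst c)"
  proof (cases "c \<in> C")
    case True then show ?thesis using assms by blast
  next
    case False
    then obtain c1 c2 where c12: "c1 \<in> C" "c2 \<in> C" "c = comb e c1 c2"
      using c unfolding elim_def by auto
    have "fst c = (\<lambda>z. (- fst c2 e) * fst c1 z + fst c1 e * fst c2 z)" using c12 unfolding comb_def by simp
    then show ?thesis using c12 assms lin_on_comb_fst[of S "fst c1" "fst c2" "- fst c2 e" "fst c1 e"] by simp
  qed
qed

lemma elim_cont:
  assumes "\<forall>c\<in>C. continuous_on UNIV (snd c)"
  shows "\<forall>c\<in>elim e C. continuous_on UNIV (snd c)"
proof
  fix c assume c: "c \<in> elim e C"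
  show "continuous_on UNIV (snd c)"
  proof (cases "c \<in> C")
    case True then show ?thesis using assms by blast
  next
    case False
    then obtain c1 c2 where c12: "c1 \<in> C" "c2 \<in> C" "c = comb e c1 c2"
      using c unfolding elim_def by auto
    have "continuous_on UNIV (snd c1)" "continuous_on UNIV (snd c2)" using c12 assms by auto
    then show ?thesis using c12 unfolding comb_def by (auto intro!: continuous_intros)
  qed
qed

lemma elim_sound:
  assumes lin: "\<forall>c\<in>C. lin_on S (fst c)" and S: "subspace S" "z \<in> S" "e \<in> S"
    and f: "feas C p (z + x *\<^sub>R e)"
  shows "feas (elim e C) p z"
  unfolding feas_def
proof
  fix c assume c: "c \<in> elim e C"
  have eq: "\<And>c. c \<in> C \<Longrightarrow> fst c (z + x *\<^sub>R e) = fst c z + x * fst c e"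
    using lin S lin_on_comb by blast
  have fc: "\<And>c. c \<in> C \<Longrightarrow> snd c p \<le> fst c z + x * fst c e"
    using f eq unfolding feas_def by fastforce
  show "snd c p \<le> fst c z"
  proof (cases "c \<in> {c\<in>C. fst c e = 0}")
    case True then show ?thesis using fc by fastforce
  next
    case False
    then obtain c1 c2 where c12: "c1 \<in> C" "c2 \<in> C" "0 < fst c1 e" "fst c2 e < 0" "c = comb e c1 c2"
      using c unfolding elim_def by auto
    have h1: "snd c1 p \<le> fst c1 z + x * fst c1 e" and h2: "snd c2 p \<le> fst c2 z + x * fst c2 e"
      using fc c12 by auto
    have "(- fst c2 e) * snd c1 p \<le> (- fst c2 e) * (fst c1 z + x * fst c1 e)"
      using h1 c12 by (intro mult_left_mono) auto
    moreover have "fst c1 e * snd c2 p \<le> fst c1 e * (fst c2 z + x * fst c2 e)"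
      using h2 c12 by (intro mult_left_mono) auto
    ultimately show ?thesis using c12 unfolding comb_def by (simp add: algebra_simps)
  qed
qed

lemma interval_pick:
  fixes L U :: "real set"
  assumes "finite L" "finite U" "\<forall>l\<in>L. \<forall>u\<in>U. l \<le> u"
    "\<forall>l\<in>L. l < x0 + d" "\<forall>u\<in>U. x0 - d < u" "0 < d"
  shows "\<exists>x. \<bar>x - x0\<bar> < d \<and> (\<forall>l\<in>L. l \<le> x) \<and> (\<forall>u\<in>U. x \<le> u)"
proof -
  define x1 where "x1 = (if L = {} then x0 else max x0 (Max L))"
  have x1a: "\<forall>l\<in>L. l \<le> x1" using assms(1) unfolding x1_def by (auto simp: le_max_iff_disj)
  have x1b: "x0 \<le> x1 \<and> x1 < x0 + d"
    using assms(1,4,6) unfolding x1_def by (auto simp: Max_in)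
  define x where "x = (if U = {} then x1 else min x1 (Min U))"
  have "\<forall>u\<in>U. x \<le> u" using assms(2) unfolding x_def by (auto simp: min_le_iff_disj)
  moreover have "\<forall>l\<in>L. l \<le> x" using x1a assms(2,3) unfolding x_def by (auto simp: Min_in)
  moreover have "\<bar>x - x0\<bar> < d"
  proof (cases "U = {}")
    case True then show ?thesis using x1b assms(6) unfolding x_def by auto
  next
    case False
    then have "x0 - d < Min U" using assms(2,5) Min_in by blast
    then show ?thesis using x1b False unfolding x_def by auto
  qed
  ultimately show ?thesis by blast
qed

lemma pair_ineq:
  fixes a1 a2 h1 h2 g1 g2 :: real
  assumes "0 < a1" "a2 < 0" "(- a2) * h1 + a1 * h2 \<le> (- a2) * g1 + a1 * g2"
  shows "(h1 - g1) / a1 \<le> (h2 - g2) / a2"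
proof -
  have "a1 * (h2 - g2) \<le> a2 * (h1 - g1)" using assms(3) by (simp add: algebra_simps)
  then have "h2 - g2 \<le> a2 * (h1 - g1) / a1" using assms(1) by (simp add: le_divide_eq mult.commute)
  then have "h2 - g2 \<le> ((h1 - g1) / a1) * a2" by (simp add: mult.commute)
  then show ?thesis using assms(2) by (simp add: le_divide_eq)
qed

lemma elim_complete:
  assumes fin: "finite C" and lin: "\<forall>c\<in>C. lin_on S (fst c)" and S: "subspace S" "z \<in> S" "e \<in> S"
    and f: "feas (elim e C) p z" and d: "0 < d"
    and lo: "\<forall>c\<in>C. 0 < fst c e \<longrightarrow> (snd c p - fst c z) / fst c e < x0 + d"
    and up: "\<forall>c\<in>C. fst c e < 0 \<longrightarrow> x0 - d < (snd c p - fst c z) / fst c e"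
  shows "\<exists>x. \<bar>x - x0\<bar> < d \<and> feas C p (z + x *\<^sub>R e)"
proof -
  define q where "q c = (snd c p - fst c z) / (fst c e :: real)" for c
  define L where "L = q ` {c\<in>C. 0 < fst c e}"
  define U where "U = q ` {c\<in>C. fst c e < 0}"
  have LU: "\<forall>l\<in>L. \<forall>u\<in>U. l \<le> u"
  proof (intro ballI)
    fix l u assume "l \<in> L" "u \<in> U"
    then obtain c1 c2 where c: "c1 \<in> C" "0 < fst c1 e" "c2 \<in> C" "fst c2 e < 0" "l = q c1" "u = q c2"
      unfolding L_def U_def by auto
    then have "comb e c1 c2 \<in> elim e C" unfolding elim_def by force
    then have "snd (comb e c1 c2) p \<le> fst (comb e c1 c2) z" using f unfolding feas_def by blast
    then show "l \<le> u" using c pair_ineq[of "fst c1 e" "fst c2 e" "snd c1 p" "snd c2 p" "fst c1 z" "fst c2 z"]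
      unfolding comb_def q_def by simp
  qed
  obtain x where x: "\<bar>x - x0\<bar> < d" "\<forall>l\<in>L. l \<le> x" "\<forall>u\<in>U. x \<le> u"
    using interval_pick[of L U x0 d] fin LU lo up d unfolding L_def U_def q_def by auto
  have "feas C p (z + x *\<^sub>R e)" unfolding feas_def
  proof
    fix c assume c: "c \<in> C"
    have eq: "fst c (z + x *\<^sub>R e) = fst c z + x * fst c e"
      using lin c S lin_on_comb by blast
    consider "fst c e = 0" | "0 < fst c e" | "fst c e < 0" by linarith
    then show "snd c p \<le> fst c (z + x *\<^sub>R e)"
    proof cases
      case 1
      then have "c \<in> elim e C" using c unfolding elim_def by auto
      then show ?thesis using f eq 1 unfolding feas_def by auto
    next
      case 2
      then have "q c \<in> L" using c unfolding L_def by blast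
      then have "q c \<le> x" using x by auto
      then show ?thesis using eq 2 unfolding q_def by (simp add: divide_simps algebra_simps)
    next
      case 3
      then have "q c \<in> U" using c unfolding U_def by blast
      then have "x \<le> q c" using x by auto
      then show ?thesis using eq 3 unfolding q_def by (simp add: divide_simps algebra_simps)
    qed
  qed
  then show ?thesis using x by blast
qed

lemma span_insert_decomp:
  "z \<in> span (insert e B) \<longleftrightarrow> (\<exists>z'\<in>span B. \<exists>x. z = z' + x *\<^sub>R e)"
proof
  assume "z \<in> span (insert e B)"
  then obtain k where "z - k *\<^sub>R e \<in> span B" using span_breakdown_eq by blast
  then show "\<exists>z'\<in>span B. \<exists>x. z = z' + x *\<^sub>R e" by (metis diff_add_cancel)
next
  assume "\<exists>z'\<in>span B. \<exists>x. z = z' + x *\<^sub>R e"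
  then obtain z' x where "z' \<in> span B" "z = z' + x *\<^sub>R e" by blast
  then show "z \<in> span (insert e B)"
    by (metis span_add span_base span_mono span_scale insertI1 subset_insertI subsetD)
qed

lemma abs_le_sum:
  fixes f :: "'b \<Rightarrow> real"
  assumes "finite C" "c \<in> C"
  shows "\<bar>f c\<bar> \<le> (\<Sum>c\<in>C. \<bar>f c\<bar>)"
  using assms by (intro member_le_sum) auto

lemma elim_exact:
  assumes fin: "finite C" and lin: "\<forall>c\<in>C. lin_on S (fst c)" and S: "subspace S" "z \<in> S" "e \<in> S"
    and f: "feas (elim e C) p z"
  shows "\<exists>x. feas C p (z + x *\<^sub>R e)"
proof -
  define d where "d = 1 + (\<Sum>c\<in>C. \<bar>(snd c p - fst c z) / fst c e\<bar>)"
  have s0: "0 \<le> (\<Sum>c\<in>C. \<bar>(snd c p - fst c z) / fst c e\<bar>)" by (intro sum_nonneg) auto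
  have b: "\<bar>(snd c p - fst c z) / fst c e\<bar> < d" if c: "c \<in> C" for c
  proof -
    have "\<bar>(snd c p - fst c z) / fst c e\<bar> \<le> (\<Sum>c\<in>C. \<bar>(snd c p - fst c z) / fst c e\<bar>)"
      by (rule abs_le_sum[OF fin c, of "\<lambda>c. (snd c p - fst c z) / fst c e"])
    then show ?thesis unfolding d_def by linarith
  qed
  have "0 < d" unfolding d_def using s0 by simp
  moreover have "\<forall>c\<in>C. 0 < fst c e \<longrightarrow> (snd c p - fst c z) / fst c e < 0 + d"
  proof (intro ballI impI)
    fix c assume c: "c \<in> C"
    have "\<bar>(snd c p - fst c z) / fst c e\<bar> < d" by (rule b[OF c])
    then show "(snd c p - fst c z) / fst c e < 0 + d" by arith
  qed
  moreover have "\<forall>c\<in>C. fst c e < 0 \<longrightarrow> 0 - d < (snd c p - fst c z) / fst c e"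
  proof (intro ballI impI)
    fix c assume c: "c \<in> C"
    have "\<bar>(snd c p - fst c z) / fst c e\<bar> < d" by (rule b[OF c])
    then show "0 - d < (snd c p - fst c z) / fst c e" by arith
  qed
  ultimately show ?thesis using elim_complete[OF fin lin S f] by blast
qed

lemma fm_closed:
  assumes S: "subspace S"
  shows "finite B \<Longrightarrow> B \<subseteq> S \<Longrightarrow> finite C \<Longrightarrow> \<forall>c\<in>C. lin_on S (fst c) \<Longrightarrow>
    \<forall>c\<in>C. continuous_on UNIV (snd c) \<Longrightarrow>
    closed {p::'p::topological_space. \<exists>z\<in>span B. feas C p z}"
proof (induction B arbitrary: C rule: finite_induct)
  case empty
  have "{p::'p. \<exists>z\<in>span {}. feas C p z} = (\<Inter>c\<in>C. {p. snd c p \<le> fst c 0})"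
    unfolding feas_def by auto
  moreover have "closed (\<Inter>c\<in>C. {p. snd c p \<le> fst c 0})"
    using empty.prems by (intro closed_INT ballI closed_Collect_le) (auto intro: continuous_intros)
  ultimately show ?case by simp
next
  case (insert e B)
  have sub: "span B \<subseteq> S" using insert.prems S by (intro span_minimal) auto
  have eS: "e \<in> S" using insert.prems by auto
  have finC: "finite C" and linC: "\<forall>c\<in>C. lin_on S (fst c)" and contC: "\<forall>c\<in>C. continuous_on UNIV (snd c)"
    using insert.prems by auto
  have eq: "{p::'p. \<exists>z\<in>span (insert e B). feas C p z} = {p. \<exists>z\<in>span B. feas (elim e C) p z}"
  proof (rule set_eqI)
    fix p :: 'p
    show "p \<in> {p. \<exists>z\<in>span (insert e B). feas C p z} \<longleftrightarrow> p \<in> {p. \<exists>z\<in>span B. feas (elim e C) p z}"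
    proof
      assume "p \<in> {p. \<exists>z\<in>span (insert e B). feas C p z}"
      then obtain z where z: "z \<in> span (insert e B)" and f: "feas C p z" by blast
      obtain z' x where z': "z' \<in> span B" "z = z' + x *\<^sub>R e" using z span_insert_decomp by blast
      have "z' \<in> S" using z' sub by blast
      then have "feas (elim e C) p z'" using elim_sound[OF linC S _ eS] f z' by blast
      then show "p \<in> {p. \<exists>z\<in>span B. feas (elim e C) p z}" using z' by blast
    next
      assume "p \<in> {p. \<exists>z\<in>span B. feas (elim e C) p z}"
      then obtain z where z: "z \<in> span B" and f: "feas (elim e C) p z" by blast
      have "z \<in> S" using z sub by blast
      then obtain x where x: "feas C p (z + x *\<^sub>R e)"
        using elim_exact[OF finC linC S _ eS f] by blast
      have "z + x *\<^sub>R e \<in> span (insert e B)" using z span_insert_decomp by blast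
      then show "p \<in> {p. \<exists>z\<in>span (insert e B). feas C p z}" using x by blast
    qed
  qed
  have "finite (elim e C)" using finC by (rule finite_elim)
  moreover have "\<forall>c\<in>elim e C. lin_on S (fst c)" using linC by (rule elim_lin)
  moreover have "\<forall>c\<in>elim e C. continuous_on UNIV (snd c)" using contC by (rule elim_cont)
  moreover have "B \<subseteq> S" using insert.prems by auto
  ultimately have "closed {p::'p. \<exists>z\<in>span B. feas (elim e C) p z}"
    using insert.IH by blast
  then show ?case using eq by simp
qed

lemma tvs_nbhd:
  fixes W :: "'a::{real_vector,topological_space} set"
  assumes addc: "continuous_on UNIV (\<lambda>p::'a \<times> 'a. fst p + snd p)"
    and smulc: "continuous_on UNIV (\<lambda>p::real \<times> 'a. fst p *\<^sub>R snd p)"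
    and W: "open W" "z0 + x0 *\<^sub>R e \<in> W"
  shows "\<exists>W' d. open W' \<and> z0 \<in> W' \<and> 0 < d \<and> (\<forall>z\<in>W'. \<forall>x. \<bar>x - x0\<bar> < d \<longrightarrow> z + x *\<^sub>R e \<in> W)"
proof -
  have c1: "continuous_on UNIV (\<lambda>w::'a \<times> real. (snd w, e))" by (intro continuous_intros)
  have c2: "continuous_on UNIV (\<lambda>w::'a \<times> real. snd w *\<^sub>R e)"
    using continuous_on_compose[OF c1, of "\<lambda>p::real \<times> 'a. fst p *\<^sub>R snd p"] continuous_on_subset[OF smulc subset_UNIV]
    by (simp add: o_def)
  have c3: "continuous_on UNIV (\<lambda>w::'a \<times> real. (fst w, snd w *\<^sub>R e))"
    using c2 by (intro continuous_intros) auto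
  have c4: "continuous_on UNIV (\<lambda>w::'a \<times> real. fst w + snd w *\<^sub>R e)"
    using continuous_on_compose[OF c3, of "\<lambda>p::'a \<times> 'a. fst p + snd p"] continuous_on_subset[OF addc subset_UNIV]
    by (simp add: o_def)
  have "open ((\<lambda>w::'a \<times> real. fst w + snd w *\<^sub>R e) -` W)"
    using open_vimage[OF W(1) c4] .
  moreover have "(z0, x0) \<in> (\<lambda>w::'a \<times> real. fst w + snd w *\<^sub>R e) -` W" using W(2) by simp
  ultimately obtain A B where AB: "open A" "open B" "(z0, x0) \<in> A \<times> B"
      "A \<times> B \<subseteq> (\<lambda>w::'a \<times> real. fst w + snd w *\<^sub>R e) -` W"
    by (rule open_prod_elim)
  obtain d where d: "0 < d" "ball x0 d \<subseteq> B" using AB(2,3) by (meson mem_Sigma_iff openE)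
  show ?thesis
  proof (intro exI conjI ballI allI impI)
    show "open A" "z0 \<in> A" "0 < d" using AB d by auto
  next
    fix z x assume "z \<in> A" "\<bar>x - x0\<bar> < d"
    then have "(z, x) \<in> A \<times> B" using d by (auto simp: dist_real_def abs_minus_commute)
    then show "z + x *\<^sub>R e \<in> W" using AB(4) by auto
  qed
qed

lemma aux_lo:
  fixes a h h0 g g0 x0 SA eta dx :: real
  assumes a: "0 < a" and hh: "\<bar>h - h0\<bar> < eta" and gg: "\<bar>g - g0\<bar> < eta"
    and f0: "h0 \<le> g0 + x0 * a" and SA: "1 / a \<le> SA" and eta: "eta = dx / (2 * (1 + SA))" and dx: "0 < dx"
  shows "(h - g) / a < x0 + dx"
proof -
  have SA0: "0 \<le> SA" using SA a by (smt (verit) divide_pos_pos)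
  have "1 + SA \<noteq> 0" using SA0 by simp
  then have e2: "2 * eta = dx / (1 + SA)" unfolding eta by (simp add: field_simps)
  have e3: "2 * eta / a = dx * (1 / a) / (1 + SA)" using e2 by simp
  have "h - g < x0 * a + 2 * eta" using hh gg f0 by linarith
  then have "(h - g) / a < (x0 * a + 2 * eta) / a" using a by (simp add: divide_strict_right_mono)
  also have "\<dots> = x0 + 2 * eta / a" using a by (simp add: field_simps)
  also have "2 * eta / a = dx * (1 / a) / (1 + SA)" by (rule e3)
  also have "\<dots> \<le> dx * SA / (1 + SA)" using SA dx SA0 by (intro divide_right_mono mult_left_mono) auto
  also have "\<dots> < dx" using dx SA0 by (simp add: field_simps)
  finally show ?thesis by simp
qed

lemma aux_up:
  fixes a h h0 g g0 x0 SA eta dx :: real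
  assumes a: "a < 0" and hh: "\<bar>h - h0\<bar> < eta" and gg: "\<bar>g - g0\<bar> < eta"
    and f0: "h0 \<le> g0 + x0 * a" and SA: "1 / \<bar>a\<bar> \<le> SA" and eta: "eta = dx / (2 * (1 + SA))" and dx: "0 < dx"
  shows "x0 - dx < (h - g) / a"
proof -
  have "(h - g) / (- a) < (- x0) + dx"
    using aux_lo[of "- a" h h0 eta g g0 "- x0" SA dx] assms by simp
  then show ?thesis by (simp add: divide_minus_right)
qed

lemma aux_k:
  fixes u x x0 ke SK dx eps :: real
  assumes "0 < eps" "dx \<le> eps / (2 * (1 + SK))" "\<bar>ke\<bar> \<le> SK" "\<bar>u\<bar> < eps / 2" "\<bar>x - x0\<bar> < dx"
  shows "\<bar>u + (x - x0) * ke\<bar> < eps"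
proof -
  have SK0: "0 \<le> SK" using assms(3) by linarith
  have "\<bar>(x - x0) * ke\<bar> = \<bar>x - x0\<bar> * \<bar>ke\<bar>" by (simp add: abs_mult)
  also have "\<dots> \<le> dx * SK" using assms(3,5) by (intro mult_mono) auto
  also have "\<dots> \<le> eps / (2 * (1 + SK)) * SK" using assms(2) SK0 by (intro mult_right_mono) auto
  also have "\<dots> < eps / 2" using SK0 assms(1) by (simp add: field_simps)
  finally show ?thesis using assms(4) by linarith
qed


lemma fm_lsc:
  fixes p0 :: "'p::topological_space" and S :: "'a::{real_vector,topological_space} set"
  assumes S: "subspace S"
    and addc: "continuous_on UNIV (\<lambda>p::'a \<times> 'a. fst p + snd p)"
    and smulc: "continuous_on UNIV (\<lambda>p::real \<times> 'a. fst p *\<^sub>R snd p)"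
  shows "finite B \<Longrightarrow> B \<subseteq> S \<Longrightarrow> finite C \<Longrightarrow> \<forall>c\<in>C. lin_on S (fst c) \<Longrightarrow>
    \<forall>c\<in>C. continuous_on UNIV (snd c) \<Longrightarrow> finite K \<Longrightarrow> \<forall>k\<in>K. lin_on S k \<Longrightarrow>
    z0 \<in> span B \<Longrightarrow> feas C p0 z0 \<Longrightarrow> open W \<Longrightarrow> z0 \<in> W \<Longrightarrow> 0 < eps \<Longrightarrow>
    \<exists>V. open V \<and> p0 \<in> V \<and> (\<forall>p\<in>V. (\<exists>z\<in>span B. feas C p z) \<longrightarrow>
       (\<exists>z\<in>span B. z \<in> W \<and> feas C p z \<and> (\<forall>k\<in>K. \<bar>k z - k z0\<bar> < eps)))"
proof (induction B arbitrary: C K z0 W eps rule: finite_induct)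
  case empty
  have z0: "z0 = 0" using empty.prems by simp
  show ?case
  proof (intro exI[of _ UNIV] conjI ballI impI)
    fix p assume p: "\<exists>z\<in>span {}. feas C p z"
    then have "feas C p z0" using z0 by simp
    then show "\<exists>z\<in>span {}. z \<in> W \<and> feas C p z \<and> (\<forall>k\<in>K. \<bar>k z - k z0\<bar> < eps)"
      using empty.prems z0 by auto
  qed auto
next
  case (insert e B)
  have finC: "finite C" and linC: "\<forall>c\<in>C. lin_on S (fst c)" and contC: "\<forall>c\<in>C. continuous_on UNIV (snd c)"
    and finK: "finite K" and linK: "\<forall>k\<in>K. lin_on S k" and z0: "z0 \<in> span (insert e B)"
    and f0: "feas C p0 z0" and W: "open W" "z0 \<in> W" and eps: "0 < eps" and BS: "B \<subseteq> S" and eS: "e \<in> S"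
    using insert.prems by auto
  have sub: "span B \<subseteq> S" using BS S by (intro span_minimal) auto
  obtain z0' x0 where z0': "z0' \<in> span B" "z0 = z0' + x0 *\<^sub>R e" using z0 span_insert_decomp by blast
  have z0'S: "z0' \<in> S" using z0' sub by blast
  have f0': "feas (elim e C) p0 z0'" using elim_sound[OF linC S z0'S eS] f0 z0' by blast
  have lin0: "\<And>g. lin_on S g \<Longrightarrow> g z0 = g z0' + x0 * g e" using z0' z0'S eS S lin_on_comb by blast
  obtain W' d0 where W': "open W'" "z0' \<in> W'" "0 < d0" "\<forall>z\<in>W'. \<forall>x. \<bar>x - x0\<bar> < d0 \<longrightarrow> z + x *\<^sub>R e \<in> W"
    using tvs_nbhd[OF addc smulc W(1), of z0' x0 e] W(2) z0'(2) by blast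
  define SK where "SK = (\<Sum>k\<in>K. \<bar>k e\<bar>)"
  define dx where "dx = min d0 (eps / (2 * (1 + SK)))"
  define Cpn where "Cpn = {c\<in>C. fst c e \<noteq> 0}"
  define SA where "SA = (\<Sum>c\<in>Cpn. 1 / \<bar>fst c e\<bar>)"
  define eta where "eta = dx / (2 * (1 + SA))"
  define eps' where "eps' = min (eps / 2) eta"
  have SK0: "0 \<le> SK" unfolding SK_def by (intro sum_nonneg) auto
  have SA0: "0 \<le> SA" unfolding SA_def by (intro sum_nonneg) auto
  have finCpn: "finite Cpn" using finC unfolding Cpn_def by auto
  have dx0: "0 < dx" unfolding dx_def using W'(3) eps SK0 by auto
  have eta0: "0 < eta" unfolding eta_def using dx0 SA0 by auto
  have eps'0: "0 < eps'" unfolding eps'_def using eta0 eps by auto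
  define V1 where "V1 = (\<Inter>c\<in>C. snd c -` ball (snd c p0) eta)"
  have V1o: "open V1" unfolding V1_def
    using finC contC by (intro open_INT ballI open_vimage open_ball) auto
  have V1p: "p0 \<in> V1" unfolding V1_def using eta0 by auto
  have V1b: "\<And>p c. p \<in> V1 \<Longrightarrow> c \<in> C \<Longrightarrow> \<bar>snd c p - snd c p0\<bar> < eta"
    unfolding V1_def by (auto simp: dist_real_def abs_minus_commute)
  have "finite (elim e C)" using finC by (rule finite_elim)
  moreover have "\<forall>c\<in>elim e C. lin_on S (fst c)" using linC by (rule elim_lin)
  moreover have "\<forall>c\<in>elim e C. continuous_on UNIV (snd c)" using contC by (rule elim_cont)
  moreover have "finite (K \<union> fst ` C)" using finK finC by auto
  moreover have "\<forall>k\<in>K \<union> fst ` C. lin_on S k" using linK linC by auto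
  ultimately obtain V2 where V2: "open V2" "p0 \<in> V2"
    "\<forall>p\<in>V2. (\<exists>z\<in>span B. feas (elim e C) p z) \<longrightarrow>
       (\<exists>z\<in>span B. z \<in> W' \<and> feas (elim e C) p z \<and> (\<forall>k\<in>K \<union> fst ` C. \<bar>k z - k z0'\<bar> < eps'))"
    using insert.IH[of "elim e C" "K \<union> fst ` C" z0' W' eps'] BS z0'(1) f0' W'(1,2) eps'0 by blast
  show ?case
  proof (intro exI[of _ "V1 \<inter> V2"] conjI ballI impI)
    show "open (V1 \<inter> V2)" using V1o V2(1) by auto
    show "p0 \<in> V1 \<inter> V2" using V1p V2(2) by auto
  next
    fix p assume pV: "p \<in> V1 \<inter> V2" and ex: "\<exists>z\<in>span (insert e B). feas C p z"
    then obtain z where z: "z \<in> span (insert e B)" "feas C p z" by blast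
    obtain z'' x'' where z'': "z'' \<in> span B" "z = z'' + x'' *\<^sub>R e" using z(1) span_insert_decomp by blast
    have "z'' \<in> S" using z'' sub by blast
    then have "feas (elim e C) p z''" using elim_sound[OF linC S _ eS] z z'' by blast
    then obtain z' where z': "z' \<in> span B" "z' \<in> W'" "feas (elim e C) p z'"
      "\<forall>k\<in>K \<union> fst ` C. \<bar>k z' - k z0'\<bar> < eps'"
      using V2(3) pV z''(1) by blast
    have z'S: "z' \<in> S" using z' sub by blast
    have lo: "\<forall>c\<in>C. 0 < fst c e \<longrightarrow> (snd c p - fst c z') / fst c e < x0 + dx"
    proof (intro ballI impI)
      fix c assume c: "c \<in> C" and a: "0 < fst c e"
      have hh: "\<bar>snd c p - snd c p0\<bar> < eta" using V1b pV c by blast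
      have gg: "\<bar>fst c z' - fst c z0'\<bar> < eta" using z'(4) c unfolding eps'_def by force
      have "snd c p0 \<le> fst c z0" using f0 c unfolding feas_def by blast
      then have ff: "snd c p0 \<le> fst c z0' + x0 * fst c e" using lin0 linC c by metis
      have cC: "c \<in> Cpn" using c a unfolding Cpn_def by auto
      have "1 / \<bar>fst c e\<bar> \<le> SA" unfolding SA_def using finCpn by (intro member_le_sum[OF cC]) auto
      then have "1 / fst c e \<le> SA" using a by simp
      then show "(snd c p - fst c z') / fst c e < x0 + dx"
        using aux_lo[OF a hh gg ff _ eta_def dx0] by blast
    qed
    have up: "\<forall>c\<in>C. fst c e < 0 \<longrightarrow> x0 - dx < (snd c p - fst c z') / fst c e"
    proof (intro ballI impI)
      fix c assume c: "c \<in> C" and a: "fst c e < 0"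
      have hh: "\<bar>snd c p - snd c p0\<bar> < eta" using V1b pV c by blast
      have gg: "\<bar>fst c z' - fst c z0'\<bar> < eta" using z'(4) c unfolding eps'_def by force
      have "snd c p0 \<le> fst c z0" using f0 c unfolding feas_def by blast
      then have ff: "snd c p0 \<le> fst c z0' + x0 * fst c e" using lin0 linC c by metis
      have cC: "c \<in> Cpn" using c a unfolding Cpn_def by auto
      have "1 / \<bar>fst c e\<bar> \<le> SA" unfolding SA_def using finCpn by (intro member_le_sum[OF cC]) auto
      then have "1 / \<bar>fst c e\<bar> \<le> SA" by simp
      then show "x0 - dx < (snd c p - fst c z') / fst c e"
        using aux_up[OF a hh gg ff _ eta_def dx0] by blast
    qed
    obtain x where x: "\<bar>x - x0\<bar> < dx" "feas C p (z' + x *\<^sub>R e)"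
      using elim_complete[OF finC linC S z'S eS z'(3) dx0 lo up] by blast
    show "\<exists>z\<in>span (insert e B). z \<in> W \<and> feas C p z \<and> (\<forall>k\<in>K. \<bar>k z - k z0\<bar> < eps)"
    proof (intro bexI conjI ballI)
      show "z' + x *\<^sub>R e \<in> span (insert e B)" using z'(1) span_insert_decomp by blast
      show "z' + x *\<^sub>R e \<in> W" using W'(4) z'(2) x(1) unfolding dx_def by auto
      show "feas C p (z' + x *\<^sub>R e)" by (rule x(2))
    next
      fix k assume k: "k \<in> K"
      have e1: "k (z' + x *\<^sub>R e) = k z' + x * k e" using lin_on_comb linK k S z'S eS by blast
      have e2: "k z0 = k z0' + x0 * k e" using lin0 linK k by blast
      have u: "\<bar>k z' - k z0'\<bar> < eps / 2" using z'(4) k unfolding eps'_def by force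
      have ke: "\<bar>k e\<bar> \<le> SK" unfolding SK_def by (rule abs_le_sum[OF finK k])
      have "\<bar>(k z' - k z0') + (x - x0) * k e\<bar> < eps"
        by (rule aux_k[OF eps _ ke u x(1)]) (simp add: dx_def)
      then show "\<bar>k (z' + x *\<^sub>R e) - k z0\<bar> < eps" using e1 e2 by (simp add: algebra_simps)
    qed
  qed
qed

theorem mainTheorem1:
  fixes geq :: "'a::{real_vector, t2_space, first_countable_topology} \<Rightarrow> 'a \<Rightarrow> bool"
    and M :: "'a set" and \<pi> :: "'a \<Rightarrow> real" and A :: "'a set"
  assumes tvs: "locally_convex_tvs TYPE('a)"
    and ord: "vector_partial_order geq"
    and M_sub: "subspace M"
    and M_fin: "\<exists>B. finite B \<and> M = span B"
    and M_dim: "1 < dim M"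
    and \<pi>_lin: "\<forall>x\<in>M. \<forall>y\<in>M. \<pi> (x + y) = \<pi> x + \<pi> y"
    and \<pi>_hom: "\<forall>c. \<forall>x\<in>M. \<pi> (c *\<^sub>R x) = c * \<pi> x"
    and A1: "\<exists>U\<in>M \<inter> positive_cone geq. \<pi> U = 1"
    and A2_closed: "closed A" and A2_zero: "0 \<in> A" and A2_proper: "A \<noteq> UNIV"
    and A2_mono: "\<forall>x\<in>A. \<forall>p\<in>positive_cone geq. x + p \<in> A"
    and A3_finite: "\<forall>X. risk_measure A M \<pi> X \<noteq> \<infinity> \<and> risk_measure A M \<pi> X \<noteq> -\<infinity>"
    and A3_cont: "continuous_on UNIV (\<lambda>X. real_of_ereal (risk_measure A M \<pi> X))"
    and poly: "polyhedral A"
  shows "\<forall>X. lsc_at M (optimal_payoffs A M \<pi>) X"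
proof -
  obtain F :: "(('a \<Rightarrow> real) \<times> real) set" where F: "finite F"
    "\<forall>(\<phi>, \<alpha>)\<in>F. \<phi> \<in> topological_dual" and AF: "A = {x. \<forall>(\<phi>, \<alpha>)\<in>F. \<phi> x \<ge> \<alpha>}"
    using poly unfolding polyhedral_def by blast
  obtain B where B: "finite B" "M = span B" using M_fin by blast
  have BM: "B \<subseteq> M" using B(2) span_superset by blast
  have addc: "continuous_on UNIV (\<lambda>p::'a \<times> 'a. fst p + snd p)"
    and smulc: "continuous_on UNIV (\<lambda>p::real \<times> 'a. fst p *\<^sub>R snd p)"
    using tvs unfolding locally_convex_tvs_def by auto
  have Flin: "\<And>\<phi> \<alpha>. (\<phi>, \<alpha>) \<in> F \<Longrightarrow> linear \<phi>" and Fcont: "\<And>\<phi> \<alpha>. (\<phi>, \<alpha>) \<in> F \<Longrightarrow> continuous_on UNIV \<phi>"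
    using F(2) unfolding topological_dual_def by auto
  have Flin_on: "\<And>\<phi> \<alpha>. (\<phi>, \<alpha>) \<in> F \<Longrightarrow> lin_on M \<phi>"
    unfolding lin_on_def using Flin by (auto simp: linear_add linear_scale)
  have pilin: "lin_on M (\<lambda>z. - \<pi> z)"
    unfolding lin_on_def using \<pi>_lin \<pi>_hom by auto
  define r where "r Y = real_of_ereal (risk_measure A M \<pi> Y)" for Y
  have rho: "risk_measure A M \<pi> Y = ereal (r Y)" for Y
    using A3_finite unfolding r_def by (cases "risk_measure A M \<pi> Y") auto
  have req: "r = (\<lambda>X. real_of_ereal (risk_measure A M \<pi> X))" by (rule ext) (simp add: r_def)
  have rcont: "continuous_on UNIV r" using A3_cont req by simp
  have inA: "Y + z \<in> A \<longleftrightarrow> (\<forall>(\<phi>, \<alpha>)\<in>F. \<alpha> - \<phi> Y \<le> \<phi> z)" for Y z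
    unfolding AF using Flin by (auto simp: linear_add)
  have low: "r Y \<le> \<pi> z" if "z \<in> M" "Y + z \<in> A" for Y z
  proof -
    have "risk_measure A M \<pi> Y \<le> ereal (\<pi> z)"
      unfolding risk_measure_def using that by (intro Inf_lower) auto
    then show ?thesis using rho by simp
  qed
  define C :: "(('a \<Rightarrow> real) \<times> ('a \<Rightarrow> real)) set" where
    "C = (\<lambda>(\<phi>, \<alpha>). (\<phi>, \<lambda>Y. \<alpha> - \<phi> Y)) ` F \<union> {(\<lambda>z. - \<pi> z, \<lambda>Y. - r Y)}"
  have finC: "finite C" unfolding C_def using F(1) by auto
  have linC: "\<forall>c\<in>C. lin_on M (fst c)" unfolding C_def using Flin_on pilin by auto
  have contC: "\<forall>c\<in>C. continuous_on UNIV (snd c)" unfolding C_def using Fcont rcont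
    by (auto intro!: continuous_intros)
  have feasC: "feas C Y z \<longleftrightarrow> Y + z \<in> A \<and> \<pi> z \<le> r Y" for Y z
    unfolding feas_def C_def inA by auto
  have Rchar: "z \<in> optimal_payoffs A M \<pi> Y \<longleftrightarrow> z \<in> M \<and> feas C Y z" for Y z
  proof -
    have "z \<in> optimal_payoffs A M \<pi> Y \<longleftrightarrow> z \<in> M \<and> Y + z \<in> A \<and> \<pi> z = r Y"
      unfolding optimal_payoffs_def rho by auto
    also have "\<dots> \<longleftrightarrow> z \<in> M \<and> Y + z \<in> A \<and> \<pi> z \<le> r Y" using low by force
    finally show ?thesis using feasC by simp
  qed
  have nonempty: "\<exists>z\<in>span B. feas C Y z" for Y
  proof -
    define CY :: "(('a \<Rightarrow> real) \<times> (real \<Rightarrow> real)) set" where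
      "CY = (\<lambda>(\<phi>, \<alpha>). (\<phi>, \<lambda>t. \<alpha> - \<phi> Y)) ` F \<union> {(\<lambda>z. - \<pi> z, \<lambda>t. - t)}"
    have finCY: "finite CY" unfolding CY_def using F(1) by auto
    have linCY: "\<forall>c\<in>CY. lin_on M (fst c)" unfolding CY_def using Flin_on pilin by auto
    have contCY: "\<forall>c\<in>CY. continuous_on UNIV (snd c)" unfolding CY_def
      by (auto intro!: continuous_intros)
    have feasCY: "feas CY t z \<longleftrightarrow> Y + z \<in> A \<and> \<pi> z \<le> t" for t z
      unfolding feas_def CY_def inA by auto
    have cl: "closed {t::real. \<exists>z\<in>span B. feas CY t z}"
      using fm_closed[OF M_sub B(1) BM finCY linCY contCY] .
    have "\<forall>e>0. \<exists>t\<in>{t::real. \<exists>z\<in>span B. feas CY t z}. dist t (r Y) < e"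
    proof (intro allI impI)
      fix e :: real assume e: "0 < e"
      have "Inf ((\<lambda>Z. ereal (\<pi> Z)) ` {Z \<in> M. Y + Z \<in> A}) < ereal (r Y + e / 2)"
        using rho[of Y] e unfolding risk_measure_def by simp
      then obtain z where z: "z \<in> M" "Y + z \<in> A" "\<pi> z < r Y + e / 2"
        unfolding Inf_less_iff by auto
      then have "feas CY (r Y + e / 2) z" using feasCY by simp
      then have "r Y + e / 2 \<in> {t::real. \<exists>z\<in>span B. feas CY t z}" using z(1) B(2) by blast
      moreover have "dist (r Y + e / 2) (r Y) < e" using e by (simp add: dist_real_def)
      ultimately show "\<exists>t\<in>{t::real. \<exists>z\<in>span B. feas CY t z}. dist t (r Y) < e" by blast
    qed
    then have "r Y \<in> {t::real. \<exists>z\<in>span B. feas CY t z}" using closed_approachable[OF cl] by blast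
    then obtain z where z: "z \<in> span B" "feas CY (r Y) z" by blast
    then have "feas C Y z" using feasCY feasC by simp
    then show ?thesis using z(1) by blast
  qed
  show ?thesis unfolding lsc_at_def
  proof (intro allI impI, elim conjE)
    fix X U assume U: "openin (top_of_set M) U" and ne: "optimal_payoffs A M \<pi> X \<inter> U \<noteq> {}"
    obtain W where W: "open W" "U = M \<inter> W" using U openin_open by blast
    obtain z0 where z0: "z0 \<in> optimal_payoffs A M \<pi> X" "z0 \<in> U" using ne by blast
    have z0': "z0 \<in> span B" "feas C X z0" "z0 \<in> W" using z0 Rchar W(2) B(2) by auto
    obtain V where V: "open V" "X \<in> V" "\<forall>p\<in>V. (\<exists>z\<in>span B. feas C p z) \<longrightarrow>
       (\<exists>z\<in>span B. z \<in> W \<and> feas C p z \<and> (\<forall>k\<in>{}. \<bar>k z - k z0\<bar> < 1))"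
      using fm_lsc[OF M_sub addc smulc B(1) BM finC linC contC, of "{}" z0 X W 1] z0' W(1) by auto
    show "\<exists>V. open V \<and> X \<in> V \<and> (\<forall>Y\<in>V. optimal_payoffs A M \<pi> Y \<inter> U \<noteq> {})"
    proof (intro exI conjI ballI)
      show "open V" "X \<in> V" using V by auto
    next
      fix Y assume Y: "Y \<in> V"
      obtain z where z: "z \<in> span B" "z \<in> W" "feas C Y z" using V(3) Y nonempty by blast
      then have "z \<in> optimal_payoffs A M \<pi> Y" "z \<in> U" using Rchar W(2) B(2) by auto
      then show "optimal_payoffs A M \<pi> Y \<inter> U \<noteq> {}" by blast
    qed
  qed
qed

end
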